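(* Suppose $\omega\subseteq X\subseteq\beta\omega$ and $X$ is $(\mathfrak c,\omega^* )$-pseudocompact. Then $\operatorname{CL}(X)$ is pseudocompact.
   Context: $\beta\omega$ is the Stone–Čech compactification of the discrete space $\omega$ (ultrafilters on $\omega$), $\omega^*$ the set of free ultrafilters on $\omega$. For $p\in\omega^*$ and a sequence $(B_n:n\in\omega)$ of subsets of a space $X$, $x\in X$ is a $p$-limit of $(B_n)$ if $\{n:V\cap B_n\ne\emptyset\}\in p$ for every neighborhood $V$ of $x$. For a cardinal $\kappa$ and $M\subseteq\omega^*$, $X$ is $(\kappa,M)$-pseudocompact if for every family $\{(V^\alpha_n:n\in\omega):\alpha<\kappa\}$ of sequences of nonempty open subsets of $X$ there is $p\in M$ such that for every $\alpha<\kappa$ the sequence $(V^\alpha_n:n\in\omega)$ has a $p$-limit point in $X$. $\operatorname{CL}(X)$ is the set of nonempty closed subsets of $X$ with the Vietoris topology; pseudocompact means every continuous real-valued function is bounded. *)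

theory Defs
  imports "HOL-Analysis.Analysis"
begin

definition is_ultrafilter_nat :: "nat set set \<Rightarrow> bool" where
  "is_ultrafilter_nat p \<longleftrightarrow>
     UNIV \<in> p \<and> {} \<notin> p \<and>
     (\<forall>A B. A \<in> p \<and> A \<subseteq> B \<longrightarrow> B \<in> p) \<and>
     (\<forall>A B. A \<in> p \<and> B \<in> p \<longrightarrow> A \<inter> B \<in> p) \<and>
     (\<forall>A. A \<in> p \<or> - A \<in> p)"

definition beta_omega :: "nat set set set" where
  "beta_omega = {p. is_ultrafilter_nat p}"

text \<open>The principal ultrafilter at n (the copy of n in beta omega).\<close>
definition principal_uf :: "nat \<Rightarrow> nat set set" where
  "principal_uf n = {A. n \<in> A}"

definition omega_star :: "nat set set set" where
  "omega_star = {p \<in> beta_omega. \<Inter>p = {}}"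

definition beta_topology :: "nat set set topology" where
  "beta_topology = topology_generated_by {{p \<in> beta_omega. A \<in> p} | A. True}"

definition p_limit :: "'a topology \<Rightarrow> nat set set \<Rightarrow> (nat \<Rightarrow> 'a set) \<Rightarrow> 'a \<Rightarrow> bool" where
  "p_limit T p B x \<longleftrightarrow> x \<in> topspace T \<and>
     (\<forall>V. openin T V \<and> x \<in> V \<longrightarrow> {n. V \<inter> B n \<noteq> {}} \<in> p)"

text \<open>(kappa, M)-pseudocompactness, with kappa given as an index set K of cardinality kappa.\<close>
definition kappa_M_pseudocompact :: "'i set \<Rightarrow> nat set set set \<Rightarrow> 'a topology \<Rightarrow> bool" where
  "kappa_M_pseudocompact K M T \<longleftrightarrow>
     (\<forall>V :: 'i \<Rightarrow> nat \<Rightarrow> 'a set.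
        (\<forall>\<alpha>\<in>K. \<forall>n. openin T (V \<alpha> n) \<and> V \<alpha> n \<noteq> {}) \<longrightarrow>
        (\<exists>p\<in>M. \<forall>\<alpha>\<in>K. \<exists>x. p_limit T p (V \<alpha>) x))"

definition CL :: "'a topology \<Rightarrow> 'a set set" where
  "CL T = {F. closedin T F \<and> F \<noteq> {}}"

definition vietoris :: "'a topology \<Rightarrow> 'a set topology" where
  "vietoris T = topology_generated_by
     ({{F \<in> CL T. F \<subseteq> U} | U. openin T U} \<union> {{F \<in> CL T. F \<inter> U \<noteq> {}} | U. openin T U})"

definition pseudocompact :: "'a topology \<Rightarrow> bool" where
  "pseudocompact T \<longleftrightarrow>
     (\<forall>f. continuous_map T euclideanreal f \<longrightarrow> bounded (f ` topspace T))"

end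

theory Submission
  imports Defs "HOL-Library.Nat_Bijection"
begin

lemma uf_finite_notin:
  assumes "p \<in> omega_star" "finite A"
  shows "A \<notin> p"
  using assms(2)
proof (induction A rule: finite_induct)
  case empty
  then show ?case using assms(1) by (auto simp: omega_star_def beta_omega_def is_ultrafilter_nat_def)
next
  case (insert a B)
  have uf: "is_ultrafilter_nat p" and I: "\<Inter>p = {}" using assms(1) by (auto simp: omega_star_def beta_omega_def)
  obtain C where C: "C \<in> p" "a \<notin> C" using I by blast
  show ?case
  proof
    assume "insert a B \<in> p"
    then have "insert a B \<inter> C \<in> p" using uf C by (auto simp: is_ultrafilter_nat_def)
    moreover have "insert a B \<inter> C \<subseteq> B" using C by auto
    ultimately have "B \<in> p" using uf by (auto simp: is_ultrafilter_nat_def)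
    then show False using insert.IH by simp
  qed
qed

lemma uf_Int_finite:
  assumes "is_ultrafilter_nat p" "finite E" "B \<in> p" "\<forall>e\<in>E. C e \<in> p"
  shows "B \<inter> (\<Inter>e\<in>E. C e) \<in> p"
  using assms(2,4)
proof (induction E rule: finite_induct)
  case empty
  then show ?case using assms(3) by simp
next
  case (insert a E)
  then have "(B \<inter> (\<Inter>e\<in>E. C e)) \<inter> C a \<in> p" using assms(1) by (auto simp: is_ultrafilter_nat_def)
  moreover have "(B \<inter> (\<Inter>e\<in>E. C e)) \<inter> C a = B \<inter> (\<Inter>e\<in>insert a E. C e)" by auto
  ultimately show ?case by simp
qed

lemma pseudocompact_from_limits:
  assumes "\<And>U. (\<forall>n. openin S (U n) \<and> U n \<noteq> {}) \<Longrightarrow> \<exists>p\<in>omega_star. \<exists>x. p_limit S p U x"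
  shows "pseudocompact S"
  unfolding pseudocompact_def
proof (intro allI impI)
  fix f assume f: "continuous_map S euclideanreal f"
  show "bounded (f ` topspace S)"
  proof (rule ccontr)
    assume nb: "\<not> bounded (f ` topspace S)"
    define U where "U n = {x \<in> topspace S. \<bar>f x\<bar> > real n}" for n
    have "\<forall>n. openin S (U n) \<and> U n \<noteq> {}"
    proof
      fix n
      have "openin S {x \<in> topspace S. f x \<in> {y. \<bar>y\<bar> > real n}}"
        using f by (intro openin_continuous_map_preimage) (auto intro!: open_Collect_less continuous_intros)
      moreover have "U n \<noteq> {}" using nb unfolding bounded_real U_def by (auto simp: not_less)
      ultimately show "openin S (U n) \<and> U n \<noteq> {}" by (simp add: U_def)
    qed
    then obtain p x where p: "p \<in> omega_star" and px: "p_limit S p U x" using assms by blast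
    define W where "W = {y \<in> topspace S. f y \<in> {z. \<bar>z\<bar> < \<bar>f x\<bar> + 1}}"
    have "openin S W"
      unfolding W_def using f by (intro openin_continuous_map_preimage) (auto intro!: open_Collect_less continuous_intros)
    moreover have "x \<in> W" using px by (auto simp: W_def p_limit_def)
    ultimately have inp: "{n. W \<inter> U n \<noteq> {}} \<in> p" using px by (auto simp: p_limit_def)
    have "{n. W \<inter> U n \<noteq> {}} \<subseteq> {..nat \<lceil>\<bar>f x\<bar> + 1\<rceil>}"
    proof
      fix n assume "n \<in> {n. W \<inter> U n \<noteq> {}}"
      then obtain y where "\<bar>f y\<bar> < \<bar>f x\<bar> + 1" "\<bar>f y\<bar> > real n" by (auto simp: W_def U_def)
      then have "real n < \<bar>f x\<bar> + 1" by linarith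
      then show "n \<in> {..nat \<lceil>\<bar>f x\<bar> + 1\<rceil>}" by (simp add: nat_le_iff) linarith
    qed
    then have "finite {n. W \<inter> U n \<noteq> {}}" using finite_subset by blast
    then show False using uf_finite_notin[OF p] inp by blast
  qed
qed

lemma topspace_beta: "topspace beta_topology = beta_omega"
  unfolding beta_topology_def topology_generated_by_topspace
  by (auto simp: beta_omega_def is_ultrafilter_nat_def)

lemma openin_beta_basic: "openin beta_topology {p \<in> beta_omega. A \<in> p}"
  unfolding beta_topology_def by (rule topology_generated_by_Basis) auto

lemma principal_in_beta: "principal_uf n \<in> beta_omega"
  by (auto simp: principal_uf_def beta_omega_def is_ultrafilter_nat_def)

lemma singleton_in_uf:
  assumes "p \<in> beta_omega"
  shows "{n} \<in> p \<longleftrightarrow> p = principal_uf n"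
proof
  assume h: "{n} \<in> p"
  have uf: "is_ultrafilter_nat p" using assms by (simp add: beta_omega_def)
  show "p = principal_uf n"
  proof (rule set_eqI)
    fix A
    show "A \<in> p \<longleftrightarrow> A \<in> principal_uf n"
    proof
      assume "A \<in> p"
      then have "A \<inter> {n} \<in> p" using h uf by (auto simp: is_ultrafilter_nat_def)
      then have "A \<inter> {n} \<noteq> {}" using uf by (auto simp: is_ultrafilter_nat_def)
      then show "A \<in> principal_uf n" by (auto simp: principal_uf_def)
    next
      assume "A \<in> principal_uf n"
      then have "n \<in> A" by (simp add: principal_uf_def)
      show "A \<in> p"
      proof (rule ccontr)
        assume "A \<notin> p"
        then have "- A \<in> p" using uf by (auto simp: is_ultrafilter_nat_def)
        then have "- A \<inter> {n} \<in> p" using h uf by (auto simp: is_ultrafilter_nat_def)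
        moreover have "- A \<inter> {n} = {}" using \<open>n \<in> A\<close> by auto
        ultimately show False using uf by (auto simp: is_ultrafilter_nat_def)
      qed
    qed
  qed
next
  assume "p = principal_uf n" then show "{n} \<in> p" by (simp add: principal_uf_def)
qed

lemma beta_nbhd:
  assumes "openin beta_topology U" "x \<in> U"
  shows "\<exists>A\<in>x. {p \<in> beta_omega. A \<in> p} \<subseteq> U"
proof -
  have xb: "x \<in> beta_omega" using openin_subset[OF assms(1)] assms(2) topspace_beta by blast
  have g: "generate_topology_on {{p \<in> beta_omega. A \<in> p} | A. True} U"
    using assms(1) unfolding beta_topology_def openin_topology_generated_by_iff .
  have "\<forall>x\<in>U. x \<in> beta_omega \<longrightarrow> (\<exists>A\<in>x. {p \<in> beta_omega. A \<in> p} \<subseteq> U)"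
    using g
  proof (induction rule: generate_topology_on.induct)
    case Empty
    then show ?case by simp
  next
    case (Int a b)
    show ?case
    proof (intro ballI impI)
      fix y assume y: "y \<in> a \<inter> b" "y \<in> beta_omega"
      obtain A where A: "A \<in> y" "{p \<in> beta_omega. A \<in> p} \<subseteq> a" using Int.IH(1) y by blast
      obtain B where B: "B \<in> y" "{p \<in> beta_omega. B \<in> p} \<subseteq> b" using Int.IH(2) y by blast
      have "A \<inter> B \<in> y" using A B y by (auto simp: beta_omega_def is_ultrafilter_nat_def)
      moreover have "{p \<in> beta_omega. A \<inter> B \<in> p} \<subseteq> a \<inter> b"
      proof
        fix p assume p: "p \<in> {p \<in> beta_omega. A \<inter> B \<in> p}"
        then have "A \<in> p" "B \<in> p" by (auto simp: beta_omega_def is_ultrafilter_nat_def)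
        then show "p \<in> a \<inter> b" using p A B by auto
      qed
      ultimately show "\<exists>C\<in>y. {p \<in> beta_omega. C \<in> p} \<subseteq> a \<inter> b" by blast
    qed
  next
    case (UN K)
    then show ?case by blast
  next
    case (Basis s)
    then show ?case by auto
  qed
  then show ?thesis using assms(2) xb by blast
qed

lemma dense_principal:
  assumes "X \<subseteq> beta_omega" "range principal_uf \<subseteq> X"
    and "openin (subtopology beta_topology X) U" "x \<in> U"
  shows "\<exists>n. principal_uf n \<in> U"
proof -
  obtain S where S: "openin beta_topology S" "U = S \<inter> X" using assms(3) by (auto simp: openin_subtopology)
  obtain A where A: "A \<in> x" "{p \<in> beta_omega. A \<in> p} \<subseteq> S" using beta_nbhd[OF S(1)] assms(4) S(2) by blast
  have "x \<in> beta_omega" using assms S by auto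
  then have "A \<noteq> {}" using A by (auto simp: beta_omega_def is_ultrafilter_nat_def)
  then obtain n where "n \<in> A" by blast
  then have "principal_uf n \<in> S" using A principal_in_beta by (auto simp: principal_uf_def)
  then show ?thesis using assms(2) S(2) by blast
qed

lemma closed_principal_set:
  assumes "X \<subseteq> beta_omega" "range principal_uf \<subseteq> X" "finite A"
  shows "closedin (subtopology beta_topology X) (principal_uf ` A)"
proof -
  have "closedin (subtopology beta_topology X) {principal_uf a}" for a
  proof -
    have "X - {principal_uf a} = {p \<in> beta_omega. - {a} \<in> p} \<inter> X"
    proof -
      have "p \<in> beta_omega \<Longrightarrow> (- {a} \<in> p \<longleftrightarrow> p \<noteq> principal_uf a)" for p
      proof -
        assume pb: "p \<in> beta_omega"
        then have uf: "is_ultrafilter_nat p" by (simp add: beta_omega_def)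
        have "- {a} \<in> p \<longleftrightarrow> {a} \<notin> p"
        proof
          assume "- {a} \<in> p"
          show "{a} \<notin> p"
          proof
            assume "{a} \<in> p"
            then have "- {a} \<inter> {a} \<in> p" using \<open>- {a} \<in> p\<close> uf unfolding is_ultrafilter_nat_def by blast
            then show False using uf unfolding is_ultrafilter_nat_def by simp
          qed
        next
          assume "{a} \<notin> p" then show "- {a} \<in> p" using uf unfolding is_ultrafilter_nat_def by blast
        qed
        then show ?thesis using singleton_in_uf[OF pb] by simp
      qed
      then show ?thesis using assms(1) by blast
    qed
    moreover have "openin (subtopology beta_topology X) ({p \<in> beta_omega. - {a} \<in> p} \<inter> X)"
      using openin_beta_basic by (auto simp: openin_subtopology)
    ultimately have "openin (subtopology beta_topology X) (topspace (subtopology beta_topology X) - {principal_uf a})"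
      using assms(1) topspace_beta by (simp add: Int_absorb1)
    moreover have "principal_uf a \<in> topspace (subtopology beta_topology X)"
      using assms topspace_beta by auto
    ultimately show ?thesis by (simp add: closedin_def)
  qed
  then have "closedin (subtopology beta_topology X) (\<Union>a\<in>A. {principal_uf a})"
    using assms(3) by (intro closedin_Union) auto
  moreover have "(\<Union>a\<in>A. {principal_uf a}) = principal_uf ` A" by blast
  ultimately show ?thesis by simp
qed

definition vnb :: "'a topology \<Rightarrow> 'a set set \<Rightarrow> 'a set \<Rightarrow> bool" where
  "vnb T W G \<longleftrightarrow> (\<exists>Q E. openin T Q \<and> finite E \<and> (\<forall>e\<in>E. openin T e) \<and> G \<subseteq> Q \<and> (\<forall>e\<in>E. G \<inter> e \<noteq> {})
     \<and> (\<forall>H\<in>CL T. H \<subseteq> Q \<and> (\<forall>e\<in>E. H \<inter> e \<noteq> {}) \<longrightarrow> H \<in> W))"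

lemma vnbE:
  assumes "vnb T W G"
  obtains Q E where "openin T Q" "finite E" "\<forall>e\<in>E. openin T e" "G \<subseteq> Q" "\<forall>e\<in>E. G \<inter> e \<noteq> {}"
     "\<forall>H\<in>CL T. H \<subseteq> Q \<and> (\<forall>e\<in>E. H \<inter> e \<noteq> {}) \<longrightarrow> H \<in> W"
  using assms unfolding vnb_def by blast

lemma vnb_Int:
  assumes "vnb T a G" "vnb T b G"
  shows "vnb T (a \<inter> b) G"
proof -
  obtain Q1 E1 where 1: "openin T Q1" "finite E1" "\<forall>e\<in>E1. openin T e" "G \<subseteq> Q1" "\<forall>e\<in>E1. G \<inter> e \<noteq> {}"
     "\<forall>H\<in>CL T. H \<subseteq> Q1 \<and> (\<forall>e\<in>E1. H \<inter> e \<noteq> {}) \<longrightarrow> H \<in> a" using assms(1) unfolding vnb_def by metis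
  obtain Q2 E2 where 2: "openin T Q2" "finite E2" "\<forall>e\<in>E2. openin T e" "G \<subseteq> Q2" "\<forall>e\<in>E2. G \<inter> e \<noteq> {}"
     "\<forall>H\<in>CL T. H \<subseteq> Q2 \<and> (\<forall>e\<in>E2. H \<inter> e \<noteq> {}) \<longrightarrow> H \<in> b" using assms(2) unfolding vnb_def by metis
  have "openin T (Q1 \<inter> Q2)" using 1(1) 2(1) by (rule openin_Int)
  moreover have "finite (E1 \<union> E2)" using 1(2) 2(2) by simp
  moreover have "\<forall>e\<in>E1 \<union> E2. openin T e" using 1(3) 2(3) by blast
  moreover have "G \<subseteq> Q1 \<inter> Q2" using 1(4) 2(4) by blast
  moreover have "\<forall>e\<in>E1 \<union> E2. G \<inter> e \<noteq> {}" using 1(5) 2(5) by blast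
  moreover have "\<forall>H\<in>CL T. H \<subseteq> Q1 \<inter> Q2 \<and> (\<forall>e\<in>E1 \<union> E2. H \<inter> e \<noteq> {}) \<longrightarrow> H \<in> a \<inter> b"
  proof (intro ballI impI)
    fix H assume "H \<in> CL T" "H \<subseteq> Q1 \<inter> Q2 \<and> (\<forall>e\<in>E1 \<union> E2. H \<inter> e \<noteq> {})"
    then show "H \<in> a \<inter> b" using 1(6) 2(6) by simp
  qed
  ultimately show ?thesis unfolding vnb_def by (intro exI[of _ "Q1 \<inter> Q2"] exI[of _ "E1 \<union> E2"] conjI)
qed

lemma vnb_mono:
  assumes "vnb T a G" "a \<subseteq> b"
  shows "vnb T b G"
proof -
  obtain Q E where 1: "openin T Q" "finite E" "\<forall>e\<in>E. openin T e" "G \<subseteq> Q" "\<forall>e\<in>E. G \<inter> e \<noteq> {}"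
     "\<forall>H\<in>CL T. H \<subseteq> Q \<and> (\<forall>e\<in>E. H \<inter> e \<noteq> {}) \<longrightarrow> H \<in> a" using assms(1) unfolding vnb_def by metis
  have "\<forall>H\<in>CL T. H \<subseteq> Q \<and> (\<forall>e\<in>E. H \<inter> e \<noteq> {}) \<longrightarrow> H \<in> b" using 1(6) assms(2) by blast
  then show ?thesis unfolding vnb_def using 1 by (intro exI[of _ Q] exI[of _ E] conjI)
qed

lemma vietoris_nbhd:
  assumes "openin (vietoris T) W" "G \<in> W"
  shows "vnb T W G"
proof -
  have g: "generate_topology_on ({{F \<in> CL T. F \<subseteq> U} | U. openin T U} \<union> {{F \<in> CL T. F \<inter> U \<noteq> {}} | U. openin T U}) W"
    using assms(1) unfolding vietoris_def openin_topology_generated_by_iff .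
  have "\<forall>G\<in>W. vnb T W G"
    using g
  proof (induction rule: generate_topology_on.induct)
    case Empty
    then show ?case by simp
  next
    case (Int a b)
    then show ?case using vnb_Int by blast
  next
    case (UN K)
    show ?case
    proof
      fix G assume "G \<in> \<Union>K"
      then obtain k where k: "k \<in> K" "G \<in> k" by blast
      then have "vnb T k G" using UN.IH by blast
      then show "vnb T (\<Union>K) G" using k by (meson Union_upper vnb_mono)
    qed
  next
    case (Basis s)
    then obtain U where U: "openin T U" and sU: "s = {F \<in> CL T. F \<subseteq> U} \<or> s = {F \<in> CL T. F \<inter> U \<noteq> {}}"
      by blast
    show ?case
    proof
      fix G assume Gs: "G \<in> s"
      show "vnb T s G"
      proof (cases "s = {F \<in> CL T. F \<subseteq> U}")
        case True
        have "\<forall>H\<in>CL T. H \<subseteq> U \<and> (\<forall>e\<in>{}. H \<inter> e \<noteq> {}) \<longrightarrow> H \<in> s" using True by simp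
        moreover have "G \<subseteq> U" using Gs True by simp
        ultimately show ?thesis unfolding vnb_def using U
          by (intro exI[of _ U] exI[of _ "{}"] conjI) simp_all
      next
        case False
        then have sU2: "s = {F \<in> CL T. F \<inter> U \<noteq> {}}" using sU by simp
        have "\<forall>H\<in>CL T. H \<subseteq> topspace T \<and> (\<forall>e\<in>{U}. H \<inter> e \<noteq> {}) \<longrightarrow> H \<in> s" using sU2 by simp
        moreover have "G \<subseteq> topspace T" using Gs sU2 by (simp add: CL_def closedin_subset)
        moreover have "\<forall>e\<in>{U}. G \<inter> e \<noteq> {}" using Gs sU2 by simp
        ultimately show ?thesis unfolding vnb_def using U
          by (intro exI[of _ "topspace T"] exI[of _ "{U}"] conjI) simp_all
      qed
    qed
  qed
  then show ?thesis using assms(2) by blast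
qed

lemma topspace_vietoris: "topspace (vietoris T) = CL T"
proof -
  have "\<Union>({{F \<in> CL T. F \<subseteq> U} | U. openin T U} \<union> {{F \<in> CL T. F \<inter> U \<noteq> {}} | U. openin T U}) \<subseteq> CL T"
    by (intro Union_least) auto
  moreover have "CL T \<subseteq> \<Union>({{F \<in> CL T. F \<subseteq> U} | U. openin T U} \<union> {{F \<in> CL T. F \<inter> U \<noteq> {}} | U. openin T U})"
  proof
    fix F assume F: "F \<in> CL T"
    then have "F \<in> {F \<in> CL T. F \<subseteq> topspace T}" by (simp add: CL_def closedin_subset)
    moreover have "{F \<in> CL T. F \<subseteq> topspace T} \<in> {{F \<in> CL T. F \<subseteq> U} | U. openin T U}" by blast
    ultimately show "F \<in> \<Union>({{F \<in> CL T. F \<subseteq> U} | U. openin T U} \<union> {{F \<in> CL T. F \<inter> U \<noteq> {}} | U. openin T U})"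
      by (meson UnCI UnionI)
  qed
  ultimately show ?thesis unfolding vietoris_def topology_generated_by_topspace by (rule antisym)
qed


lemma seq_surj: "\<exists>g :: real \<Rightarrow> nat \<Rightarrow> nat. surj g"
proof -
  obtain f :: "nat set \<Rightarrow> real" where f: "bij_betw f UNIV UNIV"
    using nat_sets_eqpoll_reals unfolding eqpoll_def by blast
  define h where "h = inv f"
  have hs: "surj h" unfolding h_def using f by (simp add: bij_betw_def inj_imp_surj_inv)
  define g where "g \<alpha> n = (LEAST m. prod_encode (n, m) \<in> h \<alpha>)" for \<alpha> n
  have "s \<in> range g" for s
  proof -
    obtain \<alpha> where a: "h \<alpha> = range (\<lambda>n. prod_encode (n, s n))" using hs by (metis surjD)
    have "g \<alpha> n = s n" for n
      unfolding g_def a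
    proof (rule Least_equality)
      show "prod_encode (n, s n) \<in> range (\<lambda>n. prod_encode (n, s n))" by blast
    next
      fix m assume "prod_encode (n, m) \<in> range (\<lambda>n. prod_encode (n, s n))"
      then show "s n \<le> m" by auto
    qed
    then have "g \<alpha> = s" by auto
    then show ?thesis by blast
  qed
  then show ?thesis by blast
qed

lemma fin_principal_in:
  assumes X1: "range principal_uf \<subseteq> X" and X2: "X \<subseteq> beta_omega"
    and W: "openin (vietoris (subtopology beta_topology X)) W" "W \<noteq> {}"
  shows "\<exists>A. finite A \<and> A \<noteq> {} \<and> principal_uf ` A \<in> W"
proof -
  let ?T = "subtopology beta_topology X"
  obtain G where G: "G \<in> W" using W by blast
  have GC: "G \<in> CL ?T" using openin_subset[OF W(1)] G unfolding topspace_vietoris by (rule subsetD)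
  obtain Q E where 1: "openin ?T Q" "finite E" "\<forall>e\<in>E. openin ?T e" "G \<subseteq> Q" "\<forall>e\<in>E. G \<inter> e \<noteq> {}"
     "\<forall>H\<in>CL ?T. H \<subseteq> Q \<and> (\<forall>e\<in>E. H \<inter> e \<noteq> {}) \<longrightarrow> H \<in> W"
    using vietoris_nbhd[OF W(1) G] by (rule vnbE)
  obtain g0 where "g0 \<in> G" using GC by (auto simp: CL_def)
  then have "g0 \<in> Q" using 1(4) by blast
  then obtain a0 where a0: "principal_uf a0 \<in> Q" using dense_principal[OF X2 X1 1(1)] by blast
  have "\<forall>e\<in>E. \<exists>a. principal_uf a \<in> Q \<inter> e"
  proof
    fix e assume e: "e \<in> E"
    then obtain y where "y \<in> G \<inter> e" using 1(5) by blast
    then have "y \<in> Q \<inter> e" using 1(4) by blast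
    moreover have "openin ?T (Q \<inter> e)" using 1(1) 1(3) e by (simp add: openin_Int)
    ultimately show "\<exists>a. principal_uf a \<in> Q \<inter> e" using dense_principal[OF X2 X1, of "Q \<inter> e" y] by blast
  qed
  then obtain c where c: "\<forall>e\<in>E. principal_uf (c e) \<in> Q \<inter> e" by (rule bchoice[elim_format]) blast
  define A where "A = insert a0 (c ` E)"
  have fA: "finite A" unfolding A_def using 1(2) by simp
  have h1: "principal_uf ` A \<in> CL ?T"
    unfolding CL_def using closed_principal_set[OF X2 X1 fA] by (simp add: A_def)
  have h2: "principal_uf ` A \<subseteq> Q" using a0 c by (auto simp: A_def)
  have h3: "\<forall>e\<in>E. principal_uf ` A \<inter> e \<noteq> {}" using c unfolding A_def by blast
  from 1(6) h1 have "principal_uf ` A \<subseteq> Q \<and> (\<forall>e\<in>E. principal_uf ` A \<inter> e \<noteq> {}) \<longrightarrow> principal_uf ` A \<in> W"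
    by (rule bspec)
  then have hW: "principal_uf ` A \<in> W" using h2 h3 by (rule mp[OF _ conjI])
  have "A \<noteq> {}" by (simp add: A_def)
  then show ?thesis using fA hW by blast
qed

theorem corollary3p3:
  fixes X :: "nat set set set"
  assumes "range principal_uf \<subseteq> X" and "X \<subseteq> beta_omega"
    and "kappa_M_pseudocompact (UNIV :: real set) omega_star (subtopology beta_topology X)"
  shows "pseudocompact (vietoris (subtopology beta_topology X))"
proof -
  let ?T = "subtopology beta_topology X"
  have tsT: "topspace ?T = X" using assms(2) topspace_beta by auto
  obtain g :: "real \<Rightarrow> nat \<Rightarrow> nat" where g: "surj g" using seq_surj by blast
  have open_sing: "openin ?T {principal_uf n}" for n
  proof -
    have "{principal_uf n} = {p \<in> beta_omega. {n} \<in> p} \<inter> X"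
    proof (rule set_eqI)
      fix q
      show "q \<in> {principal_uf n} \<longleftrightarrow> q \<in> {p \<in> beta_omega. {n} \<in> p} \<inter> X"
        using singleton_in_uf[of q n] principal_in_beta[of n] assms(1,2) by auto
    qed
    then show ?thesis using openin_beta_basic by (auto simp: openin_subtopology)
  qed
  have "\<exists>p\<in>omega_star. \<forall>\<alpha>\<in>(UNIV::real set). \<exists>x. p_limit ?T p (\<lambda>n. {principal_uf (g \<alpha> n)}) x"
    using assms(3)[unfolded kappa_M_pseudocompact_def, THEN spec[where x="\<lambda>\<alpha> n. {principal_uf (g \<alpha> n)}"]] open_sing
    by simp
  then obtain p where p: "p \<in> omega_star" and pl: "\<forall>\<alpha>::real. \<exists>x. p_limit ?T p (\<lambda>n. {principal_uf (g \<alpha> n)}) x"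
    by blast
  have lim: "\<exists>x. p_limit ?T p (\<lambda>n. {principal_uf (s n)}) x" for s
  proof -
    obtain \<alpha> where "s = g \<alpha>" using g by (metis surjD)
    then show ?thesis using pl by blast
  qed
  have uf: "is_ultrafilter_nat p" using p by (simp add: omega_star_def beta_omega_def)
  have up: "\<And>A B. A \<in> p \<Longrightarrow> A \<subseteq> B \<Longrightarrow> B \<in> p" using uf unfolding is_ultrafilter_nat_def by blast
  have emp: "{} \<notin> p" using uf unfolding is_ultrafilter_nat_def by blast
  have cmp: "\<And>A. A \<notin> p \<Longrightarrow> - A \<in> p" using uf unfolding is_ultrafilter_nat_def by blast
  have int: "\<And>A B. A \<in> p \<Longrightarrow> B \<in> p \<Longrightarrow> A \<inter> B \<in> p" using uf unfolding is_ultrafilter_nat_def by blast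
  show ?thesis
  proof (rule pseudocompact_from_limits)
    fix U :: "nat \<Rightarrow> nat set set set set" assume hU: "\<forall>n. openin (vietoris ?T) (U n) \<and> U n \<noteq> {}"
    have "\<forall>n. \<exists>A. finite A \<and> A \<noteq> {} \<and> principal_uf ` A \<in> U n"
    proof
      fix n show "\<exists>A. finite A \<and> A \<noteq> {} \<and> principal_uf ` A \<in> U n"
        by (rule fin_principal_in[OF assms(1,2)]) (use hU in auto)
    qed
    then have "\<exists>A. \<forall>n. finite (A n) \<and> A n \<noteq> {} \<and> principal_uf ` A n \<in> U n" by (rule choice)
    then obtain A where A: "\<forall>n. finite (A n) \<and> A n \<noteq> {} \<and> principal_uf ` A n \<in> U n" by (rule exE)
    define F where "F n = principal_uf ` A n" for n
    define L where "L = {x \<in> X. \<forall>V. openin ?T V \<and> x \<in> V \<longrightarrow> {n. V \<inter> F n \<noteq> {}} \<in> p}"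
    have limL: "\<exists>x\<in>L. p_limit ?T p (\<lambda>n. {principal_uf (s n)}) x" if s: "\<forall>n. s n \<in> A n" for s
    proof -
      obtain x where x: "p_limit ?T p (\<lambda>n. {principal_uf (s n)}) x" using lim by blast
      have "x \<in> L"
        unfolding L_def
      proof (intro CollectI conjI allI impI)
        show "x \<in> X" using x tsT by (simp add: p_limit_def)
      next
        fix V assume V: "openin ?T V \<and> x \<in> V"
        then have "{n. V \<inter> {principal_uf (s n)} \<noteq> {}} \<in> p" using x by (simp add: p_limit_def)
        moreover have "{n. V \<inter> {principal_uf (s n)} \<noteq> {}} \<subseteq> {n. V \<inter> F n \<noteq> {}}"
          using s by (auto simp: F_def)
        ultimately show "{n. V \<inter> F n \<noteq> {}} \<in> p" by (rule up)
      qed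
      then show ?thesis using x by blast
    qed
    have LX: "L \<subseteq> X" by (auto simp: L_def)
    have "L \<noteq> {}"
    proof -
      have "\<forall>n. (SOME a. a \<in> A n) \<in> A n" using A by (simp add: some_in_eq)
      then show ?thesis using limL[of "\<lambda>n. SOME a. a \<in> A n"] by blast
    qed
    moreover have "closedin ?T L"
    proof -
      have "openin ?T (X - L)"
      proof (subst openin_subopen, intro ballI)
        fix x assume x: "x \<in> X - L"
        then obtain V where V: "openin ?T V" "x \<in> V" "{n. V \<inter> F n \<noteq> {}} \<notin> p"
          unfolding L_def by blast
        have "V \<subseteq> X - L"
        proof
          fix y assume y: "y \<in> V"
          have "V \<subseteq> X" using openin_subset[OF V(1)] tsT by simp
          then show "y \<in> X - L" using V y unfolding L_def by blast
        qed
        then show "\<exists>T. openin ?T T \<and> x \<in> T \<and> T \<subseteq> X - L" using V by blast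
      qed
      then show ?thesis using LX tsT by (simp add: closedin_def)
    qed
    ultimately have LC: "L \<in> CL ?T" by (simp add: CL_def)
    have "p_limit (vietoris ?T) p U L"
      unfolding p_limit_def
    proof (intro conjI allI impI)
      show "L \<in> topspace (vietoris ?T)" using LC topspace_vietoris by blast
    next
      fix W assume W: "openin (vietoris ?T) W \<and> L \<in> W"
      obtain Q E where 1: "openin ?T Q" "finite E" "\<forall>e\<in>E. openin ?T e" "L \<subseteq> Q" "\<forall>e\<in>E. L \<inter> e \<noteq> {}"
        "\<forall>H\<in>CL ?T. H \<subseteq> Q \<and> (\<forall>e\<in>E. H \<inter> e \<noteq> {}) \<longrightarrow> H \<in> W"
        using vietoris_nbhd[of ?T W L] W by (rule_tac vnbE) auto
      have Qp: "{n. F n \<subseteq> Q} \<in> p"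
      proof (rule ccontr)
        assume "{n. F n \<subseteq> Q} \<notin> p"
        then have nQ: "- {n. F n \<subseteq> Q} \<in> p" by (rule cmp)
        define s where "s n = (if \<exists>a\<in>A n. principal_uf a \<notin> Q then SOME a. a \<in> A n \<and> principal_uf a \<notin> Q
          else SOME a. a \<in> A n)" for n
        have sA: "\<forall>n. s n \<in> A n"
        proof
          fix n
          show "s n \<in> A n"
          proof (cases "\<exists>a\<in>A n. principal_uf a \<notin> Q")
            case True
            then have "(SOME a. a \<in> A n \<and> principal_uf a \<notin> Q) \<in> A n \<and> principal_uf (SOME a. a \<in> A n \<and> principal_uf a \<notin> Q) \<notin> Q"
              by (metis (mono_tags, lifting) someI_ex)
            then show ?thesis using True by (simp add: s_def)
          next
            case False
            then show ?thesis using A by (simp add: s_def some_in_eq)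
          qed
        qed
        obtain x where x: "x \<in> L" "p_limit ?T p (\<lambda>n. {principal_uf (s n)}) x" using limL[OF sA] by blast
        have "x \<in> Q" using x(1) 1(4) by blast
        then have "{n. Q \<inter> {principal_uf (s n)} \<noteq> {}} \<in> p" using x(2) 1(1) by (simp add: p_limit_def)
        then have "{n. Q \<inter> {principal_uf (s n)} \<noteq> {}} \<inter> - {n. F n \<subseteq> Q} \<in> p" using nQ by (rule int)
        then have "{n. Q \<inter> {principal_uf (s n)} \<noteq> {}} \<inter> - {n. F n \<subseteq> Q} \<noteq> {}" using emp by metis
        then obtain n where "n \<in> {n. Q \<inter> {principal_uf (s n)} \<noteq> {}} \<inter> - {n. F n \<subseteq> Q}" by blast
        then have n: "principal_uf (s n) \<in> Q" "\<not> F n \<subseteq> Q" by auto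
        then have ex: "\<exists>a\<in>A n. principal_uf a \<notin> Q" by (auto simp: F_def)
        then have "principal_uf (SOME a. a \<in> A n \<and> principal_uf a \<notin> Q) \<notin> Q"
          by (metis (mono_tags, lifting) someI_ex)
        then have "principal_uf (s n) \<notin> Q" using ex by (simp add: s_def)
        then show False using n(1) by simp
      qed
      have Ep: "\<forall>e\<in>E. {n. F n \<inter> e \<noteq> {}} \<in> p"
      proof
        fix e assume e: "e \<in> E"
        then obtain x where x: "x \<in> L" "x \<in> e" using 1(5) by blast
        then have "{n. e \<inter> F n \<noteq> {}} \<in> p" using 1(3) e unfolding L_def by blast
        moreover have "{n. e \<inter> F n \<noteq> {}} = {n. F n \<inter> e \<noteq> {}}" by blast
        ultimately show "{n. F n \<inter> e \<noteq> {}} \<in> p" by simp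
      qed
      have big: "{n. F n \<subseteq> Q} \<inter> (\<Inter>e\<in>E. {n. F n \<inter> e \<noteq> {}}) \<in> p"
        by (rule uf_Int_finite[OF uf 1(2) Qp Ep])
      have "{n. F n \<subseteq> Q} \<inter> (\<Inter>e\<in>E. {n. F n \<inter> e \<noteq> {}}) \<subseteq> {n. W \<inter> U n \<noteq> {}}"
      proof
        fix n assume n: "n \<in> {n. F n \<subseteq> Q} \<inter> (\<Inter>e\<in>E. {n. F n \<inter> e \<noteq> {}})"
        have "F n \<in> CL ?T"
          unfolding CL_def F_def using closed_principal_set[OF assms(2,1)] A by auto
        from 1(6) this have "F n \<subseteq> Q \<and> (\<forall>e\<in>E. F n \<inter> e \<noteq> {}) \<longrightarrow> F n \<in> W" by (rule bspec)
        moreover have "F n \<subseteq> Q \<and> (\<forall>e\<in>E. F n \<inter> e \<noteq> {})" using n by blast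
        ultimately have "F n \<in> W" by (rule mp)
        moreover have "F n \<in> U n" using A by (simp add: F_def)
        ultimately show "n \<in> {n. W \<inter> U n \<noteq> {}}" by blast
      qed
      then show "{n. W \<inter> U n \<noteq> {}} \<in> p" using big up by blast
    qed
    then show "\<exists>p\<in>omega_star. \<exists>x. p_limit (vietoris ?T) p U x" using p by blast
  qed
qed

end
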